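(* Let $|\cdot|$ denote the Euclidean norm on $\mathbb{R}^n$. Let $l_0,l_1,\bar l_0,\bar l_1\in\mathbb{R}^n$ satisfy $$|l_1-\bar l_0|\ge |l_1-l_0|,\qquad |\bar l_1-l_0|\ge |\bar l_1-\bar l_0|,$$ and $|l_1-l_0|=|\bar l_1-\bar l_0|$. For $t\in[0,1]$ write $l_t=(1-t)l_0+tl_1$ and $\bar l_t=(1-t)\bar l_0+t\bar l_1$. Then $$|l_1-\bar l_1|\le \frac{2}{t}\,|l_s-\bar l_t|\qquad\text{for all } 0<t\le s\le 1.$$ *)

theory Defs
  imports "HOL-Analysis.Analysis"
begin

end

theory Submission
  imports Defs
begin

theorem corollary3p3:
  fixes l0 l1 lb0 lb1 :: "real ^ 'n"
  assumes "norm (l1 - lb0) \<ge> norm (l1 - l0)"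
    and "norm (lb1 - l0) \<ge> norm (lb1 - lb0)"
    and "norm (l1 - l0) = norm (lb1 - lb0)"
  shows "\<forall>t s. 0 < t \<and> t \<le> s \<and> s \<le> 1 \<longrightarrow>
    norm (l1 - lb1) \<le> (2 / t) *
      norm (((1 - s) *\<^sub>R l0 + s *\<^sub>R l1) - ((1 - t) *\<^sub>R lb0 + t *\<^sub>R lb1))"
proof (intro allI impI)
  fix t s :: real
  assume ts: "0 < t \<and> t \<le> s \<and> s \<le> 1"
  define u where "u = l1 - l0"
  define v where "v = lb1 - lb0"
  define w where "w = l1 - lb1"
  define X where "X = ((1 - s) *\<^sub>R l0 + s *\<^sub>R l1) - ((1 - t) *\<^sub>R lb0 + t *\<^sub>R lb1)"
  have X: "X = w - (1 - s) *\<^sub>R u + (1 - t) *\<^sub>R v"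
    unfolding X_def u_def v_def w_def by (simp add: algebra_simps)
  have e1: "l1 - lb0 = w + v" unfolding w_def v_def by simp
  have e2: "lb1 - l0 = u - w" unfolding w_def u_def by simp
  have "norm (w + v) ^ 2 \<ge> norm v ^ 2"
    using assms(1,3) e1 u_def v_def by (simp add: power_mono)
  hence h1: "w \<bullet> w + 2 * (w \<bullet> v) \<ge> 0"
    by (simp add: power2_norm_eq_inner inner_simps inner_commute)
  have "norm (u - w) ^ 2 \<ge> norm u ^ 2"
    using assms(2,3) e2 u_def v_def by (simp add: power_mono)
  hence h2: "w \<bullet> w - 2 * (w \<bullet> u) \<ge> 0"
    by (simp add: power2_norm_eq_inner inner_simps inner_commute)
  have wX: "w \<bullet> X = w \<bullet> w - (1 - s) * (w \<bullet> u) + (1 - t) * (w \<bullet> v)"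
    unfolding X by (simp add: inner_simps)
  have ww: "w \<bullet> w \<ge> 0" by simp
  have a1: "(1 - s) * (w \<bullet> u) \<le> (1 - s) * (w \<bullet> w / 2)"
    using ts h2 by (intro mult_left_mono) auto
  have a2: "(1 - t) * (w \<bullet> v) \<ge> (1 - t) * (- (w \<bullet> w) / 2)"
    using ts h1 by (intro mult_left_mono) auto
  have "w \<bullet> X \<ge> t * (w \<bullet> w)"
  proof -
    have "w \<bullet> X \<ge> (w \<bullet> w) * ((s + t) / 2)"
    proof -
      have "(w \<bullet> w) * ((s + t) / 2) = w \<bullet> w - (1 - s) * (w \<bullet> w / 2) + (1 - t) * (- (w \<bullet> w) / 2)"
        by (simp add: field_simps)
      thus ?thesis using wX a1 a2 by linarith
    qed
    moreover have "(w \<bullet> w) * ((s + t) / 2) \<ge> (w \<bullet> w) * t"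
      using ts ww by (intro mult_left_mono) auto
    ultimately show ?thesis by (simp add: mult.commute)
  qed
  hence "t * norm w ^ 2 \<le> norm w * norm X"
    using Cauchy_Schwarz_ineq2[of w X] by (simp add: power2_norm_eq_inner)
  hence "t * norm w \<le> norm X"
    by (cases "norm w = 0") (auto simp: power2_eq_square)
  hence "norm w \<le> norm X / t" using ts by (simp add: field_simps)
  also have "\<dots> \<le> (2 / t) * norm X" using ts by (simp add: field_simps)
  finally show "norm (l1 - lb1) \<le> (2 / t) * norm (((1 - s) *\<^sub>R l0 + s *\<^sub>R l1) - ((1 - t) *\<^sub>R lb0 + t *\<^sub>R lb1))"
    unfolding w_def X_def .
qed

end
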